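(* Let $k\in\mathbb{R}$ with $k\neq0$ and $|k|\neq1$, and let $g:\mathbb{R}^d\to\mathbb{R}^d$ be a homeomorphism topologically conjugate to the homothety $x\mapsto kx$. Then $g$ satisfies the topological shadowing property.
   Context: Let $(X,d)$ be a metric space and $f:X\to X$ a homeomorphism; $\mathcal{C}^+=\{\epsilon:X\to\mathbb{R}^+ : \epsilon \text{ continuous}\}$. For $\delta\in\mathcal{C}^+$, a sequence $\{x_n\}_{n\in\mathbb{Z}}\subset X$ is a $\delta$-pseudo-orbit of $f$ if $d(f(x_n),x_{n+1})<\delta(f(x_n))$ for every $n\in\mathbb{Z}$. For $\epsilon\in\mathcal{C}^+$, the sequence $\{x_n\}$ is $\epsilon$-shadowed by an orbit if there is $y\in X$ with $d(f^n(y),x_n)<\epsilon(x_n)$ for every $n\in\mathbb{Z}$. The homeomorphism $f$ satisfies the topological shadowing property if for every $\epsilon\in\mathcal{C}^+$ there exists $\delta\in\mathcal{C}^+$ such that every $\delta$-pseudo-orbit is $\epsilon$-shadowed by an orbit. $\mathbb{R}^d$ carries the Euclidean metric. *)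

theory Defs
  imports "HOL-Analysis.Analysis"
begin

definition pos_cont :: "('a::metric_space \<Rightarrow> real) \<Rightarrow> bool" where
  "pos_cont e \<longleftrightarrow> continuous_on UNIV e \<and> (\<forall>x. 0 < e x)"

definition int_iter :: "('a \<Rightarrow> 'a) \<Rightarrow> int \<Rightarrow> 'a \<Rightarrow> 'a" where
  "int_iter f n = (if 0 \<le> n then f ^^ nat n else inv f ^^ nat (- n))"

definition pseudo_orbit :: "('a::metric_space \<Rightarrow> 'a) \<Rightarrow> ('a \<Rightarrow> real) \<Rightarrow> (int \<Rightarrow> 'a) \<Rightarrow> bool" where
  "pseudo_orbit f \<delta> x \<longleftrightarrow> (\<forall>n. dist (f (x n)) (x (n + 1)) < \<delta> (f (x n)))"

definition shadowed :: "('a::metric_space \<Rightarrow> 'a) \<Rightarrow> ('a \<Rightarrow> real) \<Rightarrow> (int \<Rightarrow> 'a) \<Rightarrow> bool" where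
  "shadowed f \<epsilon> x \<longleftrightarrow> (\<exists>y. \<forall>n. dist (int_iter f n y) (x n) < \<epsilon> (x n))"

definition topological_shadowing :: "('a::metric_space \<Rightarrow> 'a) \<Rightarrow> bool" where
  "topological_shadowing f \<longleftrightarrow>
     (\<forall>\<epsilon>. pos_cont \<epsilon> \<longrightarrow> (\<exists>\<delta>. pos_cont \<delta> \<and>
        (\<forall>x. pseudo_orbit f \<delta> x \<longrightarrow> shadowed f \<epsilon> x)))"

end

theory Submission
  imports Defs
begin

lemma minorant:
  fixes a :: "'a::metric_space \<Rightarrow> real"
  assumes pos: "\<And>p. 0 < a p"
    and lb: "\<And>p. \<exists>c>0. \<forall>q. dist p q < 1 \<longrightarrow> c \<le> a q"
  shows "\<exists>\<delta>. pos_cont \<delta> \<and> (\<forall>p. \<delta> p \<le> a p)"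
proof -
  define G where "G p = Inf (range (\<lambda>q. a q + dist p q))" for p
  have bdd: "bdd_below (range (\<lambda>q. a q + dist p q))" for p
  proof (rule bdd_belowI[where m=0])
    fix y assume "y \<in> range (\<lambda>q. a q + dist p q)"
    then obtain q where "y = a q + dist p q" by auto
    then show "0 \<le> y" using pos[of q] zero_le_dist[of p q] by linarith
  qed
  have le: "G p \<le> a p" for p
  proof -
    have "a p + dist p p \<in> range (\<lambda>q. a q + dist p q)" by blast
    then show ?thesis unfolding G_def using cInf_lower[OF _ bdd, of "a p + dist p p" p] by simp
  qed
  have gpos: "0 < G p" for p
  proof -
    obtain c where c: "c > 0" "\<forall>q. dist p q < 1 \<longrightarrow> c \<le> a q" using lb by blast
    have "min c 1 \<le> G p" unfolding G_def
    proof (rule cInf_greatest)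
      fix y assume "y \<in> range (\<lambda>q. a q + dist p q)"
      then obtain q where y: "y = a q + dist p q" by auto
      show "min c 1 \<le> y"
      proof (cases "dist p q < 1")
        case True then show ?thesis using c y by (smt (verit) zero_le_dist)
      next
        case False then show ?thesis using y pos[of q] by linarith
      qed
    qed auto
    then show ?thesis using c by linarith
  qed
  have lip: "G p \<le> G p' + dist p p'" for p p'
  proof -
    have "G p - dist p p' \<le> G p'" unfolding G_def
    proof (rule cInf_greatest)
      fix y assume "y \<in> range (\<lambda>q. a q + dist p' q)"
      then obtain q where y: "y = a q + dist p' q" by auto
      have "Inf (range (\<lambda>q. a q + dist p q)) \<le> a q + dist p q"
        by (rule cInf_lower[OF _ bdd]) auto
      moreover have "dist p q \<le> dist p p' + dist p' q" by (rule dist_triangle)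
      ultimately show "Inf (range (\<lambda>q. a q + dist p q)) - dist p p' \<le> y" using y by linarith
    qed auto
    then show ?thesis by linarith
  qed
  have "1-lipschitz_on UNIV G"
  proof (rule lipschitz_onI)
    fix x y
    show "dist (G x) (G y) \<le> 1 * dist x y"
      using lip[of x y] lip[of y x] by (simp add: dist_real_def dist_commute abs_le_iff)
  qed auto
  then have "continuous_on UNIV G" by (rule lipschitz_on_continuous_on)
  then show ?thesis using gpos le unfolding pos_cont_def by blast
qed

lemma inf_ball:
  fixes \<epsilon> :: "'a::euclidean_space \<Rightarrow> real"
  assumes "pos_cont \<epsilon>" "0 \<le> R"
  shows "0 < Inf (\<epsilon> ` cball 0 R)" "\<And>x. x \<in> cball 0 R \<Longrightarrow> Inf (\<epsilon> ` cball 0 R) \<le> \<epsilon> x"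
    "\<And>R'. R \<le> R' \<Longrightarrow> Inf (\<epsilon> ` cball 0 R') \<le> Inf (\<epsilon> ` cball 0 R)"
proof -
  have cont: "continuous_on UNIV \<epsilon>" and p: "\<And>x. 0 < \<epsilon> x" using assms(1) by (auto simp: pos_cont_def)
  have cpt: "compact (\<epsilon> ` cball 0 R')" for R'
    by (rule compact_continuous_image) (auto intro: continuous_on_subset[OF cont])
  have bdd: "bdd_below (\<epsilon> ` cball 0 R')" for R'
    by (rule bounded_imp_bdd_below[OF compact_imp_bounded[OF cpt]])
  have ne: "\<epsilon> ` cball 0 R \<noteq> {}" using assms(2) by auto
  have "Inf (\<epsilon> ` cball 0 R) \<in> \<epsilon> ` cball 0 R"
    by (rule closed_contains_Inf[OF ne bdd compact_imp_closed[OF cpt]])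
  then show "0 < Inf (\<epsilon> ` cball 0 R)" using p by auto
  show "\<And>x. x \<in> cball 0 R \<Longrightarrow> Inf (\<epsilon> ` cball 0 R) \<le> \<epsilon> x"
    by (rule cInf_lower[OF _ bdd]) auto
  show "\<And>R'. R \<le> R' \<Longrightarrow> Inf (\<epsilon> ` cball 0 R') \<le> Inf (\<epsilon> ` cball 0 R)"
    by (rule cInf_superset_mono[OF ne bdd]) auto
qed

lemma delta_exists:
  fixes \<epsilon> :: "'a::euclidean_space \<Rightarrow> real"
  assumes eps: "pos_cont \<epsilon>" and c: "c > 0" and s: "s \<ge> 0"
  shows "\<exists>\<delta>::'a\<Rightarrow>real. pos_cont \<delta> \<and> (\<forall>q. \<delta> q \<le> 1) \<and> (\<forall>q p. norm p \<le> norm q * s + C \<longrightarrow> \<delta> q \<le> c * \<epsilon> p)"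
proof -
  define m where "m R = Inf (\<epsilon> ` cball 0 R)" for R
  define r where "r q = max 0 (norm q * s + C)" for q :: 'a
  define a where "a q = min 1 (c * m (r q))" for q
  have apos: "0 < a p" for p
    unfolding a_def m_def using inf_ball(1)[OF eps, of "r p"] c by (simp add: r_def)
  have alb: "\<exists>c'>0. \<forall>q. dist p q < 1 \<longrightarrow> c' \<le> a q" for p
  proof (intro exI conjI allI impI)
    define R where "R = max 0 ((norm p + 1) * s + C)"
    show "0 < min 1 (c * m R)" unfolding m_def using inf_ball(1)[OF eps, of R] c by (simp add: R_def)
    fix q assume "dist p q < 1"
    then have "norm q \<le> norm p + 1" by (smt (verit, best) dist_commute dist_norm norm_triangle_sub)
    then have "norm q * s \<le> (norm p + 1) * s" using s by (simp add: mult_right_mono)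
    then have "r q \<le> R" unfolding r_def R_def by linarith
    then have "m R \<le> m (r q)" unfolding m_def using inf_ball(3)[OF eps, of "r q" R] by (simp add: r_def)
    then show "min 1 (c * m R) \<le> a q" unfolding a_def using c
      by (smt (verit, best) mult_left_mono)
  qed
  obtain \<delta> where d: "pos_cont \<delta>" "\<forall>p. \<delta> p \<le> a p" using minorant[of a, OF apos alb] by blast
  have "pos_cont \<delta> \<and> (\<forall>q. \<delta> q \<le> 1) \<and> (\<forall>q p. norm p \<le> norm q * s + C \<longrightarrow> \<delta> q \<le> c * \<epsilon> p)"
  proof (intro conjI allI impI)
    show "pos_cont \<delta>" by fact
  next
    fix q show "\<delta> q \<le> 1" using d(2) unfolding a_def by (smt (verit))
  next
    fix q p :: 'a assume "norm p \<le> norm q * s + C"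
    then have "p \<in> cball 0 (r q)" by (simp add: r_def)
    then have "m (r q) \<le> \<epsilon> p" unfolding m_def using inf_ball(2)[OF eps, of "r q" p] by (simp add: r_def)
    then have "a q \<le> c * \<epsilon> p" unfolding a_def using c by (smt (verit, best) mult_left_mono)
    then show "\<delta> q \<le> c * \<epsilon> p" using d(2) by (smt (verit))
  qed
  then show ?thesis by blast
qed

lemma modulus:
  fixes \<phi> :: "'a::euclidean_space \<Rightarrow> 'b::metric_space"
  assumes cphi: "continuous_on UNIV \<phi>" and tau: "pos_cont \<tau>"
  shows "\<exists>\<rho>::'a\<Rightarrow>real. pos_cont \<rho> \<and> (\<forall>p q. dist p q < \<rho> p \<longrightarrow> dist (\<phi> p) (\<phi> q) < \<tau> (\<phi> p))"
proof -
  have ct: "continuous_on UNIV \<tau>" and tp: "\<And>x. 0 < \<tau> x" using tau by (auto simp: pos_cont_def)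
  define S where "S p = {r. 0 < r \<and> r \<le> 1 \<and> (\<forall>q. dist p q < r \<longrightarrow> dist (\<phi> p) (\<phi> q) < \<tau> (\<phi> p))}" for p
  define a where "a p = Sup (S p)" for p
  have bdd: "bdd_above (S p)" for p unfolding S_def by (rule bdd_aboveI[where M=1]) auto
  have ne: "S p \<noteq> {}" for p
  proof -
    obtain d where d: "d > 0" "\<forall>x'\<in>UNIV. dist x' p < d \<longrightarrow> dist (\<phi> x') (\<phi> p) < \<tau> (\<phi> p)"
      using cphi tp[of "\<phi> p"] unfolding continuous_on_iff by blast
    have "min d 1 \<in> S p" unfolding S_def using d by (auto simp: dist_commute)
    then show ?thesis by blast
  qed
  have apos: "0 < a p" for p
  proof -
    obtain r where "r \<in> S p" using ne by blast
    then show ?thesis unfolding a_def using cSup_upper[OF _ bdd, of r p] by (auto simp: S_def)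
  qed
  have propS: "dist (\<phi> p) (\<phi> q) < \<tau> (\<phi> p)" if hpq: "dist p q < a p" for p q
  proof -
    obtain r where "r \<in> S p" "dist p q < r" using hpq unfolding a_def less_cSup_iff[OF ne bdd] by blast
    then show ?thesis unfolding S_def by blast
  qed
  have alb: "\<exists>c>0. \<forall>q. dist p0 q < 1 \<longrightarrow> c \<le> a q" for p0
  proof -
    define K where "K = cball p0 2"
    have cK: "compact K" "K \<noteq> {}" unfolding K_def by auto
    have "continuous_on K (\<tau> \<circ> \<phi>)"
      by (rule continuous_on_compose[OF continuous_on_subset[OF cphi] continuous_on_subset[OF ct]]) auto
    then obtain x0 where x0: "x0 \<in> K" "\<forall>y\<in>K. (\<tau> \<circ> \<phi>) x0 \<le> (\<tau> \<circ> \<phi>) y"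
      using continuous_attains_inf[OF cK] by blast
    define m where "m = \<tau> (\<phi> x0)"
    have m: "m > 0" "\<And>y. y \<in> K \<Longrightarrow> m \<le> \<tau> (\<phi> y)" using x0 tp by (auto simp: m_def)
    have "uniformly_continuous_on K \<phi>"
      by (rule compact_uniformly_continuous[OF continuous_on_subset[OF cphi] cK(1)]) auto
    then obtain d where d: "d > 0" "\<forall>x\<in>K. \<forall>x'\<in>K. dist x' x < d \<longrightarrow> dist (\<phi> x') (\<phi> x) < m"
      using m(1) unfolding uniformly_continuous_on_def by blast
    show ?thesis
    proof (intro exI[where x="min d 1"] conjI allI impI)
      show "0 < min d 1" using d by simp
      fix q assume q: "dist p0 q < 1"
      have "min d 1 \<in> S q" unfolding S_def
      proof (intro CollectI conjI allI impI)
        fix q' assume q': "dist q q' < min d 1"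
        have "q \<in> K" "q' \<in> K" using q q' dist_triangle[of p0 q' q] unfolding K_def by auto
        then have "dist (\<phi> q) (\<phi> q') < m" using d(2) q' by (simp add: dist_commute)
        then show "dist (\<phi> q) (\<phi> q') < \<tau> (\<phi> q)" using m(2)[OF \<open>q \<in> K\<close>] by linarith
      qed (use d in auto)
      then show "min d 1 \<le> a q" unfolding a_def by (rule cSup_upper[OF _ bdd])
    qed
  qed
  obtain \<rho> where r: "pos_cont \<rho>" "\<forall>p. \<rho> p \<le> a p" using minorant[of a, OF apos alb] by blast
  have "\<forall>p q. dist p q < \<rho> p \<longrightarrow> dist (\<phi> p) (\<phi> q) < \<tau> (\<phi> p)"
    using propS r(2) by (meson less_le_trans)
  then show ?thesis using r(1) by blast
qed

lemma iter_orbit: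
  fixes k :: real and z :: "int \<Rightarrow> 'a::real_vector"
  assumes k: "k \<noteq> 0" and rec: "\<And>n. z (n+1) = k *\<^sub>R z n"
  shows "int_iter (\<lambda>x. k *\<^sub>R x) n (z 0) = z n"
proof -
  let ?L = "\<lambda>x::'a. k *\<^sub>R x"
  have injL: "inj ?L" using k by (auto intro: injI)
  have fw: "(?L ^^ m) (z 0) = z (int m)" for m
    by (induction m) (simp_all add: rec[symmetric] add.commute)
  have bw: "(inv ?L ^^ m) (z 0) = z (- int m)" for m
  proof (induction m)
    case 0 then show ?case by simp
  next
    case (Suc m)
    have "z (- int m) = ?L (z (- int (Suc m)))" using rec[of "- int (Suc m)"] by simp
    then have "inv ?L (z (- int m)) = z (- int (Suc m))" using inv_f_f[OF injL] by metis
    then show ?case using Suc by simp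
  qed
  show ?thesis
  proof (cases "0 \<le> n")
    case True then show ?thesis using fw[of "nat n"] by (simp add: int_iter_def)
  next
    case False then show ?thesis using bw[of "nat (- n)"] by (simp add: int_iter_def)
  qed
qed

lemma contract_shadow:
  fixes k :: real
  assumes k0: "k \<noteq> 0" and k1: "\<bar>k\<bar> < 1"
  shows "topological_shadowing (\<lambda>x::'a::euclidean_space. k *\<^sub>R x)"
  unfolding topological_shadowing_def
proof (intro allI impI)
  fix \<epsilon> :: "'a \<Rightarrow> real" assume eps: "pos_cont \<epsilon>"
  have ep: "\<And>x. 0 < \<epsilon> x" using eps by (auto simp: pos_cont_def)
  define l where "l = \<bar>k\<bar>"
  have l: "0 < l" "l < 1" using k0 k1 by (auto simp: l_def)
  define C where "C = 1 / (1 - l)"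
  have C0: "C \<ge> 0" using l by (simp add: C_def)
  define c where "c = (1 - l) / 2"
  have c: "c > 0" using l by (simp add: c_def)
  obtain \<delta> :: "'a \<Rightarrow> real" where d: "pos_cont \<delta>" "\<forall>q. \<delta> q \<le> 1"
      "\<forall>q p. norm p \<le> norm q * (1/l) + C \<longrightarrow> \<delta> q \<le> c * \<epsilon> p"
    using delta_exists[OF eps c, of "1/l" C] l by auto
  show "\<exists>\<delta>. pos_cont \<delta> \<and> (\<forall>x. pseudo_orbit (\<lambda>x. k *\<^sub>R x) \<delta> x \<longrightarrow> shadowed (\<lambda>x. k *\<^sub>R x) \<epsilon> x)"
  proof (intro exI[where x=\<delta>] conjI allI impI)
    show "pos_cont \<delta>" by fact
  next
    fix x :: "int \<Rightarrow> 'a" assume po: "pseudo_orbit (\<lambda>x. k *\<^sub>R x) \<delta> x"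
    define e where "e j = x (j+1) - k *\<^sub>R x j" for j
    have en: "norm (e j) < \<delta> (k *\<^sub>R x j)" for j
      using po unfolding pseudo_orbit_def e_def by (metis dist_norm dist_commute)
    have e1: "norm (e j) \<le> 1" for j using en[of j] d(2) by (smt (verit))
    have e2: "norm (e j) \<le> c * \<epsilon> (x n)" if "norm (x n) \<le> norm (x j) + C" for j n
    proof -
      have "norm (k *\<^sub>R x j) * (1/l) = norm (x j)" using l by (simp add: l_def)
      then have "\<delta> (k *\<^sub>R x j) \<le> c * \<epsilon> (x n)" using d(3) that by metis
      then show ?thesis using en[of j] by linarith
    qed
    have fwd: "norm (x (j + int m)) \<le> max (norm (x j)) C" for j m
    proof (induction m)
      case 0 then show ?case by simp
    next
      case (Suc m)
      define M where "M = max (norm (x j)) C"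
      have "x (j + int (Suc m)) = k *\<^sub>R x (j + int m) + e (j + int m)"
        by (simp add: e_def algebra_simps)
      then have "norm (x (j + int (Suc m))) \<le> l * norm (x (j + int m)) + 1"
        using norm_triangle_ineq[of "k *\<^sub>R x (j + int m)" "e (j + int m)"] e1[of "j + int m"]
        by (simp add: l_def)
      also have "\<dots> \<le> l * M + 1" using Suc l unfolding M_def by (simp add: mult_left_mono)
      also have "\<dots> \<le> M"
      proof -
        have "(1 - l) * C \<le> (1 - l) * M" unfolding M_def using l by (intro mult_left_mono) auto
        moreover have "(1 - l) * C = 1" using l by (simp add: C_def)
        ultimately show ?thesis by (simp add: algebra_simps)
      qed
      finally show ?case unfolding M_def .
    qed
    define f where "f n i = k ^ i *\<^sub>R e (n - 1 - int i)" for n i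
    have fn: "norm (f n i) \<le> l ^ i * (c * \<epsilon> (x n))" for n i
    proof -
      have "norm (x n) \<le> norm (x (n - 1 - int i)) + C"
        using fwd[of "n - 1 - int i" "Suc i"] C0 norm_ge_zero[of "x (n - 1 - int i)"] by (simp, linarith)
      then have "norm (e (n - 1 - int i)) \<le> c * \<epsilon> (x n)" by (rule e2)
      then show ?thesis unfolding f_def using l by (simp add: l_def power_abs mult_left_mono)
    qed
    have fs: "summable (f n)" for n
    proof (rule summable_comparison_test')
      show "summable (\<lambda>i. l ^ i)" using l by (intro summable_geometric) simp
      fix i show "norm (f n i) \<le> l ^ i"
        unfolding f_def using e1 l by (simp add: l_def power_abs mult_left_le)
    qed
    define S where "S n = suminf (f n)" for n
    have Srec: "S (n+1) = e n + k *\<^sub>R S n" for n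
    proof -
      have "(\<Sum>i. f (n+1) (Suc i)) = suminf (f (n+1)) - f (n+1) 0" by (rule suminf_split_head[OF fs])
      moreover have "f (n+1) (Suc i) = k *\<^sub>R f n i" for i unfolding f_def by (simp add: algebra_simps)
      moreover have "f (n+1) 0 = e n" unfolding f_def by simp
      moreover have "k *\<^sub>R S n = (\<Sum>i. k *\<^sub>R f n i)" unfolding S_def by (rule suminf_scaleR_right[OF fs])
      ultimately show ?thesis unfolding S_def by simp
    qed
    have Sb: "norm (S n) < \<epsilon> (x n)" for n
    proof -
      have gs: "(\<lambda>i. l ^ i * (c * \<epsilon> (x n))) sums (1 / (1 - l) * (c * \<epsilon> (x n)))"
        by (rule sums_mult2[OF geometric_sums]) (use l in simp)
      have "norm (S n) \<le> (\<Sum>i. norm (f n i))" unfolding S_def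
        by (rule summable_norm) (rule summable_comparison_test'[OF sums_summable[OF gs]], simp add: fn)
      also have "\<dots> \<le> (\<Sum>i. l ^ i * (c * \<epsilon> (x n)))"
        by (rule suminf_le) (auto simp: fn intro: sums_summable[OF gs]
          summable_comparison_test'[OF sums_summable[OF gs]])
      also have "\<dots> = 1 / (1 - l) * (c * \<epsilon> (x n))" by (rule sums_unique[OF gs, symmetric])
      also have "\<dots> = \<epsilon> (x n) / 2" using l by (simp add: c_def)
      finally show ?thesis using ep[of "x n"] by linarith
    qed
    define z where "z n = x n - S n" for n
    have zrec: "z (n+1) = k *\<^sub>R z n" for n
      unfolding z_def Srec e_def by (simp add: algebra_simps)
    show "shadowed (\<lambda>x. k *\<^sub>R x) \<epsilon> x" unfolding shadowed_def
    proof (intro exI[where x="z 0"] allI)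
      fix n
      show "dist (int_iter (\<lambda>x. k *\<^sub>R x) n (z 0)) (x n) < \<epsilon> (x n)"
        using iter_orbit[of k z, OF k0 zrec, of n] Sb[of n] by (simp add: z_def dist_norm)
    qed
  qed
qed

lemma expand_shadow:
  fixes k :: real
  assumes k1: "1 < \<bar>k\<bar>"
  shows "topological_shadowing (\<lambda>x::'a::euclidean_space. k *\<^sub>R x)"
  unfolding topological_shadowing_def
proof (intro allI impI)
  fix \<epsilon> :: "'a \<Rightarrow> real" assume eps: "pos_cont \<epsilon>"
  have k0: "k \<noteq> 0" using k1 by auto
  have ep: "\<And>x. 0 < \<epsilon> x" using eps by (auto simp: pos_cont_def)
  define l where "l = \<bar>k\<bar>"
  define u where "u = 1 / l"
  have l: "1 < l" using k1 by (auto simp: l_def)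
  have u: "0 < u" "u < 1" "u * l = 1" using l by (auto simp: u_def)
  define C where "C = u / (1 - u)"
  have C0: "C \<ge> 0" using u by (simp add: C_def)
  define c where "c = (1 - u) / 2"
  have c: "c > 0" using u by (simp add: c_def)
  obtain \<delta> :: "'a \<Rightarrow> real" where d: "pos_cont \<delta>" "\<forall>q. \<delta> q \<le> 1"
      "\<forall>q p. norm p \<le> norm q * (1/l) + C \<longrightarrow> \<delta> q \<le> c * \<epsilon> p"
    using delta_exists[OF eps c, of "1/l" C] l by auto
  show "\<exists>\<delta>. pos_cont \<delta> \<and> (\<forall>x. pseudo_orbit (\<lambda>x. k *\<^sub>R x) \<delta> x \<longrightarrow> shadowed (\<lambda>x. k *\<^sub>R x) \<epsilon> x)"
  proof (intro exI[where x=\<delta>] conjI allI impI)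
    show "pos_cont \<delta>" by fact
  next
    fix x :: "int \<Rightarrow> 'a" assume po: "pseudo_orbit (\<lambda>x. k *\<^sub>R x) \<delta> x"
    define e where "e j = x (j+1) - k *\<^sub>R x j" for j
    have en: "norm (e j) < \<delta> (k *\<^sub>R x j)" for j
      using po unfolding pseudo_orbit_def e_def by (metis dist_norm dist_commute)
    have e1: "norm (e j) \<le> 1" for j using en[of j] d(2) by (smt (verit))
    have e2: "norm (e j) \<le> c * \<epsilon> (x n)" if "norm (x n) \<le> norm (x j) + C" for j n
    proof -
      have "norm (k *\<^sub>R x j) * (1/l) = norm (x j)" using l by (simp add: l_def)
      then have "\<delta> (k *\<^sub>R x j) \<le> c * \<epsilon> (x n)" using d(3) that by metis
      then show ?thesis using en[of j] by linarith
    qed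
    have bwd: "norm (x j) \<le> max (norm (x (j + int m))) C" for j m
    proof (induction m arbitrary: j)
      case 0 then show ?case by simp
    next
      case (Suc m)
      define M where "M = max (norm (x (j + int (Suc m)))) C"
      have "k *\<^sub>R x j = x (j + 1) - e j" by (simp add: e_def)
      then have "norm (k *\<^sub>R x j) = norm (x (j + 1) - e j)" by simp
      then have "l * norm (x j) \<le> norm (x (j+1)) + 1"
        using norm_triangle_ineq4[of "x (j + 1)" "e j"] e1[of j] by (simp add: l_def)
      then have "u * (l * norm (x j)) \<le> u * (norm (x (j+1)) + 1)" using u by (simp add: mult_left_mono)
      then have "norm (x j) \<le> u * (norm (x (j+1)) + 1)" using u by (simp add: mult.assoc[symmetric])
      also have "\<dots> \<le> u * (M + 1)"
        using Suc.IH[of "j+1"] u unfolding M_def by (intro mult_left_mono) (auto simp: algebra_simps)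
      also have "\<dots> \<le> M"
      proof -
        have "(1 - u) * C \<le> (1 - u) * M" unfolding M_def using u by (intro mult_left_mono) auto
        moreover have "(1 - u) * C = u" using u by (simp add: C_def)
        ultimately show ?thesis by (simp add: algebra_simps)
      qed
      finally show ?case unfolding M_def .
    qed
    define f where "f n i = (1/k) ^ Suc i *\<^sub>R e (n + int i)" for n i
    have fn: "norm (f n i) \<le> u ^ Suc i * (c * \<epsilon> (x n))" for n i
    proof -
      have "norm (x n) \<le> norm (x (n + int i)) + C"
        using bwd[of n i] C0 norm_ge_zero[of "x (n + int i)"] by (simp, linarith)
      then have "norm (e (n + int i)) \<le> c * \<epsilon> (x n)" by (rule e2)
      moreover have "norm ((1/k) ^ Suc i) = u ^ Suc i" by (simp add: u_def l_def power_abs)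
      moreover have "norm (f n i) = norm ((1/k) ^ Suc i) * norm (e (n + int i))" unfolding f_def
        by (simp only: norm_scaleR real_norm_def)
      ultimately show ?thesis using u by (simp add: mult_left_mono)
    qed
    have gsum: "summable (\<lambda>i. u ^ Suc i * B)" for B
      using u by (intro summable_mult2 summable_Suc_iff[THEN iffD2] summable_geometric) simp
    have fs: "summable (f n)" for n
    proof (rule summable_comparison_test')
      show "summable (\<lambda>i. u ^ Suc i * 1)" by (rule gsum)
      fix i show "norm (f n i) \<le> u ^ Suc i * 1"
      proof -
        have "norm ((1/k) ^ Suc i) = u ^ Suc i" by (simp add: u_def l_def power_abs)
        moreover have "norm (f n i) = norm ((1/k) ^ Suc i) * norm (e (n + int i))" unfolding f_def
          by (simp only: norm_scaleR real_norm_def)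
        ultimately show ?thesis using u e1[of "n + int i"] by (simp add: mult_left_le)
      qed
    qed
    define T where "T n = suminf (f n)" for n
    have Trec: "k *\<^sub>R T n = e n + T (n+1)" for n
    proof -
      have "(\<Sum>i. f n (Suc i)) = suminf (f n) - f n 0" by (rule suminf_split_head[OF fs])
      moreover have "f n (Suc i) = (1/k) *\<^sub>R f (n+1) i" for i unfolding f_def by (simp add: algebra_simps)
      moreover have "f n 0 = (1/k) *\<^sub>R e n" unfolding f_def by simp
      moreover have "(1/k) *\<^sub>R T (n+1) = (\<Sum>i. (1/k) *\<^sub>R f (n+1) i)" unfolding T_def by (rule suminf_scaleR_right[OF fs])
      ultimately have "T n = (1/k) *\<^sub>R e n + (1/k) *\<^sub>R T (n+1)" unfolding T_def by simp
      then show ?thesis using k0 by (simp add: scaleR_add_right)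
    qed
    have Tb: "norm (T n) < \<epsilon> (x n)" for n
    proof -
      have gs: "(\<lambda>i. u ^ Suc i * (c * \<epsilon> (x n))) sums (u / (1 - u) * (c * \<epsilon> (x n)))"
        using sums_mult2[OF sums_mult[OF geometric_sums[of u]], of u "c * \<epsilon> (x n)"] u by simp
      have "norm (T n) \<le> (\<Sum>i. norm (f n i))" unfolding T_def
        by (rule summable_norm) (rule summable_comparison_test'[OF sums_summable[OF gs]], simp only: real_norm_def abs_norm_cancel, rule fn)
      also have "\<dots> \<le> (\<Sum>i. u ^ Suc i * (c * \<epsilon> (x n)))"
        by (rule suminf_le, rule fn, rule summable_comparison_test'[OF sums_summable[OF gs]], simp only: real_norm_def abs_norm_cancel, rule fn,
            rule sums_summable[OF gs])
      also have "\<dots> = u / (1 - u) * (c * \<epsilon> (x n))" by (rule sums_unique[OF gs, symmetric])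
      also have "\<dots> = u * \<epsilon> (x n) / 2" using u by (simp add: c_def)
      finally have "norm (T n) \<le> u * \<epsilon> (x n) / 2" .
      moreover have "u * \<epsilon> (x n) < 1 * \<epsilon> (x n)" using u ep[of "x n"] by (intro mult_strict_right_mono) auto
      ultimately show ?thesis using ep[of "x n"] by linarith
    qed
    define z where "z n = x n + T n" for n
    have zrec: "z (n+1) = k *\<^sub>R z n" for n
      unfolding z_def using Trec[of n] by (simp add: algebra_simps e_def)
    show "shadowed (\<lambda>x. k *\<^sub>R x) \<epsilon> x" unfolding shadowed_def
    proof (intro exI[where x="z 0"] allI)
      fix n
      show "dist (int_iter (\<lambda>x. k *\<^sub>R x) n (z 0)) (x n) < \<epsilon> (x n)"
        using iter_orbit[of k z, OF k0 zrec, of n] Tb[of n] by (simp add: z_def dist_norm)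
    qed
  qed
qed

lemma iter_conj:
  fixes g L h h' :: "'a \<Rightarrow> 'a"
  assumes hh: "\<And>x. h' (h x) = x" "\<And>y. h (h' y) = y" and conj: "\<And>x. h (g x) = L (h x)"
    and injg: "inj g" and surjL: "surj L"
  shows "int_iter g n (h' z) = h' (int_iter L n z)"
proof -
  have g1: "g (h' w) = h' (L w)" for w by (metis hh conj)
  have fw: "(g ^^ m) (h' z) = h' ((L ^^ m) z)" for m by (induction m) (simp_all add: g1)
  have g2: "inv g (h' w) = h' (inv L w)" for w
  proof -
    have "g (h' (inv L w)) = h' w" using g1 surj_f_inv_f[OF surjL] by metis
    then show ?thesis using inv_f_f[OF injg] by metis
  qed
  have bw: "(inv g ^^ m) (h' z) = h' ((inv L ^^ m) z)" for m by (induction m) (simp_all add: g2)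
  show ?thesis unfolding int_iter_def using fw bw by simp
qed

lemma conj_shadow:
  fixes g L h h' :: "'a::euclidean_space \<Rightarrow> 'a"
  assumes hom: "homeomorphism UNIV UNIV h h'" and conj: "\<And>x. h (g x) = L (h x)"
    and injg: "inj g" and surjL: "surj L" and sh: "topological_shadowing L"
  shows "topological_shadowing g"
  unfolding topological_shadowing_def
proof (intro allI impI)
  have hh: "\<And>x. h' (h x) = x" "\<And>y. h (h' y) = y" and ch: "continuous_on UNIV h"
    and ch': "continuous_on UNIV h'" using hom by (auto simp: homeomorphism_def)
  fix \<epsilon> :: "'a \<Rightarrow> real" assume eps: "pos_cont \<epsilon>"
  obtain \<epsilon>L where eL: "pos_cont \<epsilon>L" "\<forall>p q. dist p q < \<epsilon>L p \<longrightarrow> dist (h' p) (h' q) < \<epsilon> (h' p)"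
    using modulus[OF ch' eps] by blast
  obtain \<delta>L where dL: "pos_cont \<delta>L" "\<forall>x. pseudo_orbit L \<delta>L x \<longrightarrow> shadowed L \<epsilon>L x"
    using sh eL(1) unfolding topological_shadowing_def by blast
  obtain \<delta> where d: "pos_cont \<delta>" "\<forall>p q. dist p q < \<delta> p \<longrightarrow> dist (h p) (h q) < \<delta>L (h p)"
    using modulus[OF ch dL(1)] by blast
  show "\<exists>\<delta>. pos_cont \<delta> \<and> (\<forall>x. pseudo_orbit g \<delta> x \<longrightarrow> shadowed g \<epsilon> x)"
  proof (intro exI[where x=\<delta>] conjI allI impI)
    show "pos_cont \<delta>" by fact
  next
    fix x assume po: "pseudo_orbit g \<delta> x"
    define w where "w n = h (x n)" for n
    have "pseudo_orbit L \<delta>L w" unfolding pseudo_orbit_def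
    proof
      fix n
      have "dist (g (x n)) (x (n+1)) < \<delta> (g (x n))" using po unfolding pseudo_orbit_def by blast
      then have "dist (h (g (x n))) (h (x (n+1))) < \<delta>L (h (g (x n)))" using d(2) by blast
      then show "dist (L (w n)) (w (n + 1)) < \<delta>L (L (w n))" by (simp add: w_def conj)
    qed
    then obtain z where z: "\<forall>n. dist (int_iter L n z) (w n) < \<epsilon>L (w n)"
      using dL(2) unfolding shadowed_def by blast
    show "shadowed g \<epsilon> x" unfolding shadowed_def
    proof (intro exI[where x="h' z"] allI)
      fix n
      have "dist (w n) (int_iter L n z) < \<epsilon>L (w n)" using z by (simp add: dist_commute)
      then have "dist (h' (w n)) (h' (int_iter L n z)) < \<epsilon> (h' (w n))" using eL(2) by blast
      then show "dist (int_iter g n (h' z)) (x n) < \<epsilon> (x n)"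
        using iter_conj[OF hh conj injg surjL] by (simp add: w_def hh dist_commute)
    qed
  qed
qed

theorem mainTheorem7:
  fixes k :: real and g :: "real ^ 'd \<Rightarrow> real ^ 'd"
  assumes "k \<noteq> 0" and "\<bar>k\<bar> \<noteq> 1"
    and "\<exists>g'. homeomorphism UNIV UNIV g g'"
    and "\<exists>(h :: real ^ 'd \<Rightarrow> real ^ 'd) h'. homeomorphism UNIV UNIV h h' \<and> (\<forall>x. h (g x) = k *\<^sub>R h x)"
  shows "topological_shadowing g"
proof -
  obtain g' where gg: "homeomorphism UNIV UNIV g g'" using assms(3) by blast
  have injg: "inj g" using gg by (metis homeomorphism_def injI UNIV_I)
  obtain h h' :: "real ^ 'd \<Rightarrow> real ^ 'd" where hom: "homeomorphism UNIV UNIV h h'"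
    and conj: "\<forall>x. h (g x) = k *\<^sub>R h x" using assms(4) by blast
  have surjL: "surj (\<lambda>x::real ^ 'd. k *\<^sub>R x)"
  proof -
    have "y = k *\<^sub>R ((1/k) *\<^sub>R y)" for y :: "real ^ 'd" using assms(1) by simp
    then show ?thesis by blast
  qed
  have "topological_shadowing (\<lambda>x::real ^ 'd. k *\<^sub>R x)"
  proof (cases "\<bar>k\<bar> < 1")
    case True then show ?thesis using contract_shadow[OF assms(1)] by blast
  next
    case False then have "1 < \<bar>k\<bar>" using assms(2) by linarith
    then show ?thesis by (rule expand_shadow)
  qed
  then show ?thesis using conj_shadow[OF hom _ injg surjL] conj by blast
qed

end
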